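(* Let $P$ be a convex polygon with no two edges parallel, and let $e_s,e_t$ be edges with $e_s\preceq e_t$. Let $S$ be the set of pairs $(e_i,e_j)$ with $e_i\prec e_j$ and $e_i,e_j\in\{e_s,e_{s+1},\ldots,e_t\}$. Then every point $Z_i^j$ with $(e_i,e_j)\in S$ lies in $\rho=[v_{t+1}\circlearrowright v_s]$, and for $(e_i,e_j)\in S$ and $(e_{i'},e_{j'})\in S$: if $e_i\preceq e_{i'}$ and $e_j\preceq e_{j'}$, then $Z_i^j\le_\rho Z_{i'}^{j'}$.
   Context: $P$ is a compact convex polygon with boundary $\partial P$, edges $e_1,\ldots,e_n$ in clockwise order and vertices $v_1,\ldots,v_n$, $e_i$ the open segment from $v_i$ to $v_{i+1}$ (indices mod $n$); $e_s,e_{s+1},\ldots,e_t$ denotes the edges met going clockwise from $e_s$ to $e_t$. $\ell_i$ is the line containing $e_i$, $\mathsf{I}_{i,j}=\ell_i\cap\ell_j$. $\mathrm{disprod}_{l,l'}(X)=d_l(X)d_{l'}(X)$ where $d_l$ is distance to the line $l$. For distinct edges, $e_i\prec e_j$ means $\mathsf{I}_{i,j}=v_i+t(v_{i+1}-v_i)$ for some $t\ge1$ (equivalently the clockwise turning angle from direction $v_{i+1}-v_i$ to $v_{j+1}-v_j$ is in $(0,\pi)$); $e_i\preceq e_j$ means $e_i=e_j$ or $e_i\prec e_j$. For $e_i\prec e_j$, $Z_i^j$ is the unique point of $P$ maximizing $\mathrm{disprod}_{\ell_i,\ell_j}$ over $P$ (it lies on $\partial P$). $[X\circlearrowright X']$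 is the closed portion of $\partial P$ from $X$ clockwise to $X'$. For a boundary portion $\rho$ and $A,B\in\rho$, $A<_\rho B$ means $A$ is met before $B$ when traversing $\rho$ clockwise, and $A\le_\rho B$ means $A=B$ or $A<_\rho B$. *)

theory Defs
  imports "HOL-Analysis.Analysis"
begin

text \<open>A polygon with n vertices is given by v :: nat => real^2; vertex i is v (i mod n),
  edge e_i is the open segment from vertex i to vertex i+1 (indices mod n).\<close>

definition cross2 :: "real^2 \<Rightarrow> real^2 \<Rightarrow> real" where
  "cross2 a b = a$1 * b$2 - a$2 * b$1"

definition vtx :: "nat \<Rightarrow> (nat \<Rightarrow> real^2) \<Rightarrow> nat \<Rightarrow> real^2" where
  "vtx n v i = v (i mod n)"

definition edir :: "nat \<Rightarrow> (nat \<Rightarrow> real^2) \<Rightarrow> nat \<Rightarrow> real^2" where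
  "edir n v i = vtx n v (Suc i) - vtx n v i"

text \<open>Strictly convex polygon with vertices listed in clockwise order:
  every other vertex lies strictly to the right of each directed edge.\<close>
definition convex_cw_polygon :: "nat \<Rightarrow> (nat \<Rightarrow> real^2) \<Rightarrow> bool" where
  "convex_cw_polygon n v \<longleftrightarrow> n \<ge> 3 \<and>
     (\<forall>i<n. \<forall>k<n. k \<noteq> i \<and> k \<noteq> Suc i mod n \<longrightarrow> cross2 (edir n v i) (v k - v i) < 0)"

definition no_parallel_edges :: "nat \<Rightarrow> (nat \<Rightarrow> real^2) \<Rightarrow> bool" where
  "no_parallel_edges n v \<longleftrightarrow> (\<forall>i<n. \<forall>j<n. i \<noteq> j \<longrightarrow> cross2 (edir n v i) (edir n v j) \<noteq> 0)"

definition poly :: "nat \<Rightarrow> (nat \<Rightarrow> real^2) \<Rightarrow> (real^2) set" where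
  "poly n v = convex hull (v ` {..<n})"

definition eline :: "nat \<Rightarrow> (nat \<Rightarrow> real^2) \<Rightarrow> nat \<Rightarrow> (real^2) set" where
  "eline n v i = {vtx n v i + t *\<^sub>R edir n v i | t. True}"

definition eprec :: "nat \<Rightarrow> (nat \<Rightarrow> real^2) \<Rightarrow> nat \<Rightarrow> nat \<Rightarrow> bool" where
  "eprec n v i j \<longleftrightarrow> i mod n \<noteq> j mod n \<and>
     (\<exists>t\<ge>1. vtx n v i + t *\<^sub>R edir n v i \<in> eline n v j)"

definition epreceq :: "nat \<Rightarrow> (nat \<Rightarrow> real^2) \<Rightarrow> nat \<Rightarrow> nat \<Rightarrow> bool" where
  "epreceq n v i j \<longleftrightarrow> i mod n = j mod n \<or> eprec n v i j"

definition disprod :: "(real^2) set \<Rightarrow> (real^2) set \<Rightarrow> real^2 \<Rightarrow> real" where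
  "disprod l l' X = infdist X l * infdist X l'"

definition Zpt :: "nat \<Rightarrow> (nat \<Rightarrow> real^2) \<Rightarrow> nat \<Rightarrow> nat \<Rightarrow> real^2" where
  "Zpt n v i j = (THE X. X \<in> poly n v \<and>
      (\<forall>Y\<in>poly n v. disprod (eline n v i) (eline n v j) Y \<le> disprod (eline n v i) (eline n v j) X))"

definition edge_range :: "nat \<Rightarrow> nat \<Rightarrow> nat \<Rightarrow> nat set" where
  "edge_range n s t = {(s + k) mod n | k. k \<le> (t + n - s) mod n}"

definition bpath :: "nat \<Rightarrow> (nat \<Rightarrow> real^2) \<Rightarrow> real \<Rightarrow> real^2" where
  "bpath n v x = vtx n v (nat \<lfloor>x\<rfloor>) + (x - of_int \<lfloor>x\<rfloor>) *\<^sub>R edir n v (nat \<lfloor>x\<rfloor>)"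

definition arc_len :: "nat \<Rightarrow> nat \<Rightarrow> nat \<Rightarrow> nat" where
  "arc_len n a b = (b mod n + n - a mod n) mod n"

definition in_arc :: "nat \<Rightarrow> (nat \<Rightarrow> real^2) \<Rightarrow> nat \<Rightarrow> nat \<Rightarrow> real^2 \<Rightarrow> bool" where
  "in_arc n v a b X \<longleftrightarrow>
     (\<exists>p. real (a mod n) \<le> p \<and> p \<le> real (a mod n) + real (arc_len n a b) \<and> bpath n v p = X)"

definition arc_le :: "nat \<Rightarrow> (nat \<Rightarrow> real^2) \<Rightarrow> nat \<Rightarrow> nat \<Rightarrow> real^2 \<Rightarrow> real^2 \<Rightarrow> bool" where
  "arc_le n v a b A B \<longleftrightarrow>
     (\<exists>p q. real (a mod n) \<le> p \<and> p \<le> q \<and> q \<le> real (a mod n) + real (arc_len n a b) \<and>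
            bpath n v p = A \<and> bpath n v q = B)"

end

theory Submission
  imports Defs
begin



lemma offs_eq_aux: "a \<le> b \<Longrightarrow> b < (n::nat) \<Longrightarrow> (c + a) mod n = (c + b) mod n \<Longrightarrow> a = b"
proof -
  assume h: "a \<le> b" "b < n" "(c + a) mod n = (c + b) mod n"
  have "n dvd (c+b) - (c+a)" using h mod_eq_dvd_iff_nat[of "c+a" "c+b" n] by simp
  hence "n dvd b - a" by simp
  thus ?thesis using h nat_dvd_not_less[of "b-a" n] by (cases "a = b") auto
qed
lemma offs_eq: "a < (n::nat) \<Longrightarrow> b < n \<Longrightarrow> (c + a) mod n = (c + b) mod n \<longleftrightarrow> a = b"
  by (metis le_cases offs_eq_aux)

lemma cross2_simps:
  "cross2 (a + b) c = cross2 a c + cross2 b c"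
  "cross2 c (a + b) = cross2 c a + cross2 c b"
  "cross2 (a - b) c = cross2 a c - cross2 b c"
  "cross2 c (a - b) = cross2 c a - cross2 c b"
  "cross2 (r *\<^sub>R a) c = r * cross2 a c"
  "cross2 c (r *\<^sub>R a) = r * cross2 c a"
  "cross2 (- a) c = - cross2 a c"
  "cross2 c (- a) = - cross2 c a"
  "cross2 a a = 0"
  by (simp_all add: cross2_def algebra_simps)

lemma cross2_anti: "cross2 a b = - cross2 b a"
  by (simp add: cross2_def)

lemma cross2_jac: "cross2 e y * cross2 x z = cross2 e x * cross2 y z + cross2 e z * cross2 x y"
  by (simp add: cross2_def algebra_simps)

lemma cross2_decomp: "cross2 u w *\<^sub>R x = cross2 x w *\<^sub>R u + cross2 u x *\<^sub>R w"
  unfolding cross2_def vec_eq_iff forall_2 by (simp add: algebra_simps)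
lemma cross2_zero_vec: "cross2 a x = 0 \<Longrightarrow> cross2 b x = 0 \<Longrightarrow> cross2 a b \<noteq> 0 \<Longrightarrow> x = 0"
  using cross2_decomp[of a b x] cross2_anti[of x b] by simp
lemma cross2_sum: "finite S \<Longrightarrow> cross2 (\<Sum>x\<in>S. f x) c = (\<Sum>x\<in>S. cross2 (f x) c)"
  by (induction S rule: finite_induct) (simp_all add: cross2_def sum_component algebra_simps sum_distrib_left sum_subtractf)

lemma lagrange2: "(norm b)\<^sup>2 * (norm d)\<^sup>2 = (b \<bullet> d)\<^sup>2 + (cross2 b d)\<^sup>2"
  unfolding power2_norm_eq_inner inner_vec_def sum_2 cross2_def by (simp add: power2_eq_square algebra_simps)

lemma dist_line_ge:
  assumes "d \<noteq> 0"
  shows "dist x (w + t *\<^sub>R d) \<ge> \<bar>cross2 (x - w) d\<bar> / norm d"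
proof -
  define b where "b = x - (w + t *\<^sub>R d)"
  have cb: "cross2 b d = cross2 (x - w) d" by (simp add: b_def cross2_simps)
  have "(cross2 b d)\<^sup>2 \<le> (norm b)\<^sup>2 * (norm d)\<^sup>2" using lagrange2[of b d] by simp
  hence "\<bar>cross2 b d\<bar>\<^sup>2 \<le> (norm b * norm d)\<^sup>2" by (simp add: power_mult_distrib)
  hence "\<bar>cross2 b d\<bar> \<le> norm b * norm d"
    by (rule power2_le_imp_le) simp
  hence "\<bar>cross2 b d\<bar> / norm d \<le> norm b" using assms by (simp add: divide_le_eq)
  thus ?thesis using cb by (simp add: b_def dist_norm)
qed


lemma dist_line_eq:
  assumes "d \<noteq> 0" and t0_def: "t0 = ((x - w) \<bullet> d) / (d \<bullet> d)"
  shows "dist x (w + t0 *\<^sub>R d) = \<bar>cross2 (x - w) d\<bar> / norm d"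
proof -
  define a where "a = x - w"
  define p where "p = a \<bullet> d"
  define q where "q = d \<bullet> d"
  have dd: "q > 0" using assms by (simp add: q_def)
  have t0: "t0 = p / q" by (simp add: t0_def p_def q_def a_def)
  have "(norm (a - t0 *\<^sub>R d))\<^sup>2 = a \<bullet> a - 2 * t0 * p + t0^2 * q"
    unfolding power2_norm_eq_inner p_def q_def
    by (simp add: inner_diff_left inner_diff_right power2_eq_square inner_commute algebra_simps)
  also have "\<dots> = a \<bullet> a - p^2 / q"
    using dd unfolding t0 by (simp add: power2_eq_square field_simps)
  also have "\<dots> = (cross2 a d)\<^sup>2 / q"
  proof -
    have "(a \<bullet> a) * q = p^2 + (cross2 a d)\<^sup>2"
      using lagrange2[of a d] by (simp add: power2_norm_eq_inner p_def q_def)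
    thus ?thesis using dd by (simp add: field_simps)
  qed
  also have "\<dots> = (\<bar>cross2 a d\<bar> / norm d)\<^sup>2"
    by (simp add: power_divide q_def power2_norm_eq_inner)
  finally have "(norm (a - t0 *\<^sub>R d))\<^sup>2 = (\<bar>cross2 a d\<bar> / norm d)\<^sup>2" .
  hence "norm (a - t0 *\<^sub>R d) = \<bar>cross2 a d\<bar> / norm d"
    by (rule power2_eq_imp_eq) simp_all
  thus ?thesis by (simp add: dist_norm a_def algebra_simps)
qed

lemma infdist_line:
  assumes "d \<noteq> 0"
  shows "infdist x {w + t *\<^sub>R d | t. True} = \<bar>cross2 (x - w) d\<bar> / norm d"
proof (rule antisym)
  define t0 where "t0 = ((x - w) \<bullet> d) / (d \<bullet> d)"
  have "w + t0 *\<^sub>R d \<in> {w + t *\<^sub>R d | t. True}" by blast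
  thus "infdist x {w + t *\<^sub>R d | t. True} \<le> \<bar>cross2 (x - w) d\<bar> / norm d"
    using infdist_le[of "w + t0 *\<^sub>R d" "{w + t *\<^sub>R d | t. True}" x] dist_line_eq[OF assms t0_def]
    by simp
  show "\<bar>cross2 (x - w) d\<bar> / norm d \<le> infdist x {w + t *\<^sub>R d | t. True}"
    unfolding infdist_def
    by (auto intro!: cINF_greatest dist_line_ge[OF assms])
qed

locale cp =
  fixes n :: nat and v :: "nat \<Rightarrow> real^2"
  assumes cvx: "convex_cw_polygon n v" and npar: "no_parallel_edges n v"
begin

abbreviation "W \<equiv> vtx n v"
abbreviation "D \<equiv> edir n v"
definition H :: "nat \<Rightarrow> real^2 \<Rightarrow> real" where "H k X = cross2 (X - W k) (D k)"

lemma n3: "n \<ge> 3" using cvx by (simp add: convex_cw_polygon_def)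
lemma npos: "n > 0" using n3 by simp

lemma W_mod: "W (k mod n) = W k" by (simp add: vtx_def)
lemma D_mod: "D (k mod n) = D k" by (simp add: edir_def vtx_def mod_Suc_eq)
lemma W_Suc: "W (Suc k) = W k + D k" by (simp add: edir_def)
lemma W_n: "W (k + n) = W k" by (simp add: vtx_def)
lemma D_n: "D (k + n) = D k"
proof -
  have "Suc (k+n) = Suc k + n" by simp
  hence "Suc (k+n) mod n = Suc k mod n" by (metis mod_add_self2)
  thus ?thesis by (simp add: edir_def vtx_def)
qed

lemma conv: "m mod n \<noteq> k mod n \<Longrightarrow> m mod n \<noteq> Suc k mod n \<Longrightarrow> cross2 (D k) (W m - W k) < 0"
proof -
  assume h: "m mod n \<noteq> k mod n" "m mod n \<noteq> Suc k mod n"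
  have "cross2 (D (k mod n)) (v (m mod n) - v (k mod n)) < 0"
    using cvx h npos unfolding convex_cw_polygon_def by (auto simp: mod_Suc_eq)
  thus ?thesis by (simp add: D_mod vtx_def)
qed

lemma nonpar: "k mod n \<noteq> m mod n \<Longrightarrow> cross2 (D k) (D m) \<noteq> 0"
proof -
  assume h: "k mod n \<noteq> m mod n"
  have "cross2 (D (k mod n)) (D (m mod n)) \<noteq> 0"
    using npar h npos unfolding no_parallel_edges_def by auto
  thus ?thesis by (simp add: D_mod)
qed

lemma H_add: "H k (X + Y) = H k X + cross2 Y (D k)"
  by (simp add: H_def cross2_simps algebra_simps)
lemma H_W_self: "H k (W k) = 0" by (simp add: H_def cross2_def)
lemma H_W_Suc: "H k (W (Suc k)) = 0" by (simp add: H_def W_Suc cross2_simps)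
lemma H_W_pos: "m mod n \<noteq> k mod n \<Longrightarrow> m mod n \<noteq> Suc k mod n \<Longrightarrow> H k (W m) > 0"
  using conv[of m k] by (simp add: H_def cross2_anti[of "W m - W k"])
lemma H_W_nonneg: "H k (W m) \<ge> 0"
proof (cases "m mod n = k mod n \<or> m mod n = Suc k mod n")
  case True
  then show ?thesis using H_W_self H_W_Suc W_mod by (metis order_refl)
next
  case False
  then show ?thesis using H_W_pos[of m k] by auto
qed

lemma turn: "cross2 (D k) (D (Suc k)) < 0"
proof -
  have a: "(k + 2) mod n \<noteq> (k + 0) mod n" using offs_eq[of 2 n 0 k] n3 by simp
  have b: "(k + 2) mod n \<noteq> (k + 1) mod n" using offs_eq[of 2 n 1 k] n3 by simp
  have "cross2 (D k) (W (k+2) - W k) < 0" using conv[of "k+2" k] a b by simp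
  moreover have "W (k+2) - W k = D k + D (Suc k)"
    using W_Suc[of k] W_Suc[of "Suc k"] by (simp add: numeral_2_eq_2)
  ultimately have "cross2 (D k) (D k + D (Suc k)) < 0" by metis
  thus ?thesis by (simp only: cross2_simps)
qed

lemma offs_ne: "a < n \<Longrightarrow> b < n \<Longrightarrow> a \<noteq> b \<Longrightarrow> (c + a) mod n \<noteq> (c + b) mod n"
  using offs_eq by blast

lemma cross_lin_R: "cross2 (x *\<^sub>R u + y *\<^sub>R w) e = x * cross2 u e + y * cross2 w e"
  by (simp add: cross2_simps)

lemma local_min_contra:
  assumes mu: "3 \<le> mu" "mu < n"
    and inc1: "cross2 (D (b + mu)) (D b) > 0"
    and inc0: "cross2 (D (b + mu - 1)) (D b) \<le> 0"
  shows False
proof -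
  obtain c' where c': "c' = b + mu - 1" by blast
  have cc: "Suc c' = b + mu" using c' mu by simp
  have "b mod n = (b + 0) mod n" by simp
  have bc: "b mod n \<noteq> (b + mu) mod n" using offs_ne[of 0 mu b] mu by simp
  have bc': "b mod n \<noteq> c' mod n" using offs_ne[of 0 "mu - 1" b] mu c' by simp
  have bc1: "(b + mu) mod n \<noteq> Suc b mod n" using offs_ne[of mu 1 b] mu by simp
  define u where "u = D (Suc c')"
  define w where "w = - D c'"
  define x where "x = W b - W (Suc c')"
  have uw: "cross2 u w < 0"
    using turn[of c'] by (simp add: u_def w_def cross2_simps cross2_anti[of "D (Suc c')"])
  have Hc: "H b (W (Suc c')) > 0" using H_W_pos[of "Suc c'" b] cc bc bc1 by simp
  have psix: "cross2 x (D b) = - H b (W (Suc c'))"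
    by (simp add: x_def H_def cross2_simps)
  have psiu: "cross2 u (D b) > 0" using inc1 cc u_def by simp
  have psiw: "cross2 w (D b) \<ge> 0" using inc0 c' w_def by (simp add: cross2_simps)
  have "cross2 (D c') (W b - W c') < 0"
    using conv[of b c'] bc' bc cc by simp
  moreover have "W (Suc c') = W c' + D c'" by (rule W_Suc)
  ultimately have xw: "cross2 x w < 0"
    by (simp add: x_def w_def cross2_simps cross2_anti[of "W b" "D c'"] cross2_anti[of "W c'" "D c'"])
  have ux: "cross2 u x \<le> 0"
  proof (cases "b mod n = Suc (Suc c') mod n")
    case True
    hence "W b = W (Suc (Suc c'))" by (metis W_mod)
    thus ?thesis by (simp add: u_def x_def W_Suc[of "Suc c'"] cross2_simps)
  next
    case False
    hence "cross2 (D (Suc c')) (W b - W (Suc c')) < 0" using conv[of b "Suc c'"] bc cc by simp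
    thus ?thesis by (simp add: u_def x_def)
  qed
  have "cross2 (cross2 u w *\<^sub>R x) (D b) = cross2 (cross2 x w *\<^sub>R u + cross2 u x *\<^sub>R w) (D b)"
    by (simp only: cross2_decomp[of u w x])
  hence eq: "cross2 u w * cross2 x (D b) = cross2 x w * cross2 u (D b) + cross2 u x * cross2 w (D b)"
    by (simp only: cross_lin_R cross2_simps)
  have "cross2 u w * cross2 x (D b) > 0" using uw psix Hc by (simp add: mult_neg_pos)
  moreover have "cross2 x w * cross2 u (D b) < 0" using xw psiu by (simp add: mult_neg_pos)
  moreover have "cross2 u x * cross2 w (D b) \<le> 0" using ux psiw by (simp add: mult_nonpos_nonneg)
  ultimately show False using eq by linarith
qed

lemma prefix:
  assumes g: "gam < n" and neg: "cross2 (D b) (D (b + gam)) < 0" and m: "1 \<le> m" "m \<le> gam"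
  shows "cross2 (D b) (D (b + m)) < 0"
proof (rule ccontr)
  assume "\<not> ?thesis"
  moreover have "cross2 (D b) (D (b + m)) \<noteq> 0"
    using nonpar[of b "b+m"] offs_ne[of 0 m b] m g by simp
  ultimately have im: "cross2 (D (b+m)) (D b) < 0" using cross2_anti[of "D b" "D (b+m)"] by linarith
  have m1: "m \<noteq> 1" using turn[of b] im cross2_anti[of "D b"] by (auto)
  have mg: "m \<noteq> gam" using neg im cross2_anti[of "D b"] by auto
  define P where "P = (\<lambda>mu. m < mu \<and> mu \<le> gam \<and> cross2 (D (b + mu)) (D b) > 0)"
  have Pg: "P gam" using m mg neg cross2_anti[of "D b"] by (simp add: P_def)
  define mu where "mu = (LEAST mu. P mu)"
  have Pmu: "P mu" using LeastI[of P gam] Pg mu_def by simp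
  have "cross2 (D (b + mu - 1)) (D b) \<le> 0"
  proof (cases "mu - 1 = m")
    case True
    hence "b + mu - 1 = b + m" using Pmu P_def by auto
    thus ?thesis using im by simp
  next
    case False
    hence "\<not> P (mu - 1)" using not_less_Least[of "mu - 1" P] Pmu mu_def P_def by auto
    thus ?thesis using False Pmu P_def by (auto simp: add_diff_assoc)
  qed
  moreover have "3 \<le> mu" using Pmu P_def m m1 by auto
  moreover have "mu < n" using Pmu P_def g by auto
  ultimately show False using local_min_contra[of mu b] Pmu P_def by auto
qed

lemma jac_trans:
  assumes "cross2 e x < 0" "cross2 e y < 0" "cross2 e z < 0" "cross2 x y < 0" "cross2 y z < 0"
  shows "cross2 x z < 0"
proof -
  have "cross2 e x * cross2 y z > 0" "cross2 e z * cross2 x y > 0"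
    using assms by (simp_all add: mult_neg_neg)
  hence "cross2 e y * cross2 x z > 0" using cross2_jac[of e y x z] by linarith
  thus ?thesis using assms(2) by (simp add: zero_less_mult_iff)
qed

lemma chain:
  assumes g: "gam < n" and neg: "cross2 (D b) (D (b + gam)) < 0" and bk: "be < k" "k \<le> gam"
  shows "cross2 (D (b + be)) (D (b + k)) < 0"
proof (cases "be = 0")
  case True
  thus ?thesis using prefix[OF g neg, of k] bk by simp
next
  case False
  have "\<forall>be. 1 \<le> be \<and> be < k \<and> k \<le> gam \<longrightarrow> cross2 (D (b + be)) (D (b + k)) < 0"
  proof (induction k)
    case 0 thus ?case by simp
  next
    case (Suc k)
    show ?case
    proof (intro allI impI)
      fix be assume h: "1 \<le> be \<and> be < Suc k \<and> Suc k \<le> gam"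
      show "cross2 (D (b + be)) (D (b + Suc k)) < 0"
      proof (cases "be = k")
        case True thus ?thesis using turn[of "b+k"] by simp
      next
        case False
        hence "cross2 (D (b + be)) (D (b + k)) < 0" using Suc h by auto
        moreover have "cross2 (D b) (D (b + be)) < 0" using prefix[OF g neg, of be] h by simp
        moreover have "cross2 (D b) (D (b + k)) < 0" using prefix[OF g neg, of k] h False by simp
        moreover have "cross2 (D b) (D (b + Suc k)) < 0" using prefix[OF g neg, of "Suc k"] h by simp
        moreover have "cross2 (D (b + k)) (D (b + Suc k)) < 0" using turn[of "b+k"] by simp
        ultimately show ?thesis using jac_trans by blast
      qed
    qed
  qed
  thus ?thesis using False bk by auto
qed

lemma D_nz: "D k \<noteq> 0" using turn[of k] by (auto simp: cross2_def)

lemma eprec_cross: "eprec n v i j \<Longrightarrow> cross2 (D i) (D j) < 0"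
proof -
  assume e: "eprec n v i j"
  then obtain t s where t: "t \<ge> 1" and eq: "W i + t *\<^sub>R D i = W j + s *\<^sub>R D j"
    by (auto simp: eprec_def eline_def)
  have "H j (W i + t *\<^sub>R D i) = H j (W j + s *\<^sub>R D j)" using eq by simp
  hence "H j (W i) + t * cross2 (D i) (D j) = 0"
    by (simp add: H_add H_W_self cross2_simps)
  moreover have "H j (W i) \<ge> 0" by (rule H_W_nonneg)
  ultimately have "t * cross2 (D i) (D j) \<le> 0" by linarith
  hence "cross2 (D i) (D j) \<le> 0" using t by (simp add: mult_le_0_iff)
  moreover have "cross2 (D i) (D j) \<noteq> 0" using e nonpar by (simp add: eprec_def)
  ultimately show ?thesis by linarith
qed

lemma H_affine: "u + w = 1 \<Longrightarrow> H k (u *\<^sub>R x + w *\<^sub>R y) = u * H k x + w * H k y"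
proof -
  assume h: "u + w = 1"
  have "u *\<^sub>R x + w *\<^sub>R y - W k = u *\<^sub>R (x - W k) + w *\<^sub>R (y - W k)"
    using h by (simp add: algebra_simps scaleR_add_left[symmetric])
  thus ?thesis by (simp add: H_def cross2_simps)
qed

lemma H_sum: "finite S \<Longrightarrow> sum u S = 1 \<Longrightarrow> H k (\<Sum>x\<in>S. u x *\<^sub>R x) = (\<Sum>x\<in>S. u x * H k x)"
proof -
  assume f: "finite S" and s: "sum u S = 1"
  have "(\<Sum>x\<in>S. u x *\<^sub>R x) - W k = (\<Sum>x\<in>S. u x *\<^sub>R (x - W k))"
    using s by (simp add: scaleR_diff_right sum_subtractf scaleR_sum_left[symmetric])
  thus ?thesis using f by (simp add: H_def cross2_sum cross2_simps)
qed

abbreviation "P \<equiv> poly n v"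

lemma P_convex: "convex P" by (simp add: poly_def convex_convex_hull)
lemma P_compact: "compact P" by (simp add: poly_def compact_convex_hull finite_imp_compact)
lemma W_in_P: "W k \<in> P"
proof -
  have "v (k mod n) \<in> v ` {..<n}" using npos by simp
  thus ?thesis by (simp add: poly_def vtx_def hull_inc)
qed
lemma P_ne: "P \<noteq> {}" using W_in_P by blast

lemma H_nonneg_P: "X \<in> P \<Longrightarrow> H k X \<ge> 0"
proof -
  assume X: "X \<in> P"
  have "convex {Y. H k Y \<ge> 0}"
    unfolding convex_def by (auto simp: H_affine intro!: add_nonneg_nonneg mult_nonneg_nonneg)
  moreover have "v ` {..<n} \<subseteq> {Y. H k Y \<ge> 0}"
    using H_W_nonneg by (auto simp: vtx_def) (metis H_W_nonneg mod_less vtx_def)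
  ultimately have "P \<subseteq> {Y. H k Y \<ge> 0}" unfolding poly_def by (rule hull_minimal[rotated])
  thus ?thesis using X by auto
qed

lemma infdist_eline: "infdist X (eline n v k) = \<bar>H k X\<bar> / norm (D k)"
  unfolding eline_def H_def using infdist_line[OF D_nz] by simp

lemma disprod_P: "X \<in> P \<Longrightarrow> disprod (eline n v i) (eline n v j) X = H i X * H j X / (norm (D i) * norm (D j))"
  by (simp add: disprod_def infdist_eline H_nonneg_P)

lemma Y0_exists: "\<exists>Y0\<in>P. \<forall>k. H k Y0 > 0"
proof -
  define Y1 where "Y1 = (1/2) *\<^sub>R W 1 + (1/2) *\<^sub>R W 2"
  define Y0 where "Y0 = (1/3) *\<^sub>R W 0 + (2/3) *\<^sub>R Y1"
  have "Y1 \<in> P" unfolding Y1_def using P_convex W_in_P by (simp add: convex_def)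
  hence "Y0 \<in> P" unfolding Y0_def using P_convex W_in_P by (simp add: convex_def)
  moreover have "H k Y0 > 0" for k
  proof -
    have e: "H k Y0 = (1/3) * H k (W 0) + (2/3) * ((1/2) * H k (W 1) + (1/2) * H k (W 2))"
      unfolding Y0_def Y1_def by (simp add: H_affine)
    have d01: "(0::nat) mod n \<noteq> 1 mod n" "(0::nat) mod n \<noteq> 2 mod n" "(1::nat) mod n \<noteq> 2 mod n"
      using n3 by auto
    have "H k (W 0) > 0 \<or> H k (W 1) > 0 \<or> H k (W 2) > 0"
    proof (rule ccontr)
      assume "\<not> ?thesis"
      hence "\<not> (H k (W 0) > 0)" "\<not> (H k (W 1) > 0)" "\<not> (H k (W 2) > 0)" by auto
      hence "(0 mod n = k mod n \<or> 0 mod n = Suc k mod n)" "(1 mod n = k mod n \<or> 1 mod n = Suc k mod n)"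
        "(2 mod n = k mod n \<or> 2 mod n = Suc k mod n)"
        using H_W_pos by blast+
      thus False using d01 by auto
    qed
    moreover have "H k (W 0) \<ge> 0" "H k (W 1) \<ge> 0" "H k (W 2) \<ge> 0" using H_W_nonneg by auto
    ultimately have "H k (W 0) + H k (W 1) + H k (W 2) > 0" by linarith
    moreover have "H k Y0 = (H k (W 0) + H k (W 1) + H k (W 2)) / 3" unfolding e by simp
    ultimately show ?thesis by simp
  qed
  ultimately show ?thesis by blast
qed

lemma max_exists: "\<exists>Z\<in>P. \<forall>Y\<in>P. H i Y * H j Y \<le> H i Z * H j Z"
proof -
  have "continuous_on P (\<lambda>X. disprod (eline n v i) (eline n v j) X)"
    unfolding disprod_def by (intro continuous_intros)
  then obtain Z where Z: "Z \<in> P" "\<forall>Y\<in>P. disprod (eline n v i) (eline n v j) Y \<le> disprod (eline n v i) (eline n v j) Z"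
    using continuous_attains_sup[OF P_compact P_ne] by blast
  have c: "norm (D i) * norm (D j) > 0" using D_nz by simp
  have "\<forall>Y\<in>P. H i Y * H j Y \<le> H i Z * H j Z"
  proof
    fix Y assume "Y \<in> P"
    hence "H i Y * H j Y / (norm (D i) * norm (D j)) \<le> H i Z * H j Z / (norm (D i) * norm (D j))"
      using Z disprod_P by metis
    thus "H i Y * H j Y \<le> H i Z * H j Z" using c by (simp add: divide_le_cancel)
  qed
  thus ?thesis using Z by blast
qed

lemma max_pos:
  assumes Z: "Z \<in> P" "\<forall>Y\<in>P. H i Y * H j Y \<le> H i Z * H j Z"
  shows "H i Z > 0" "H j Z > 0"
proof -
  obtain Y0 where "Y0 \<in> P" "\<forall>k. H k Y0 > 0" using Y0_exists by blast
  hence "H i Z * H j Z > 0" using Z by (smt (verit) mult_pos_pos)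
  moreover have "H i Z \<ge> 0" "H j Z \<ge> 0" using Z H_nonneg_P by auto
  ultimately show "H i Z > 0" "H j Z > 0" by (auto simp: zero_less_mult_iff)
qed

lemma max_unique:
  assumes ij: "cross2 (D i) (D j) \<noteq> 0"
    and Z: "Z \<in> P" "\<forall>Y\<in>P. H i Y * H j Y \<le> H i Z * H j Z"
    and Y: "Y \<in> P" "H i Y * H j Y = H i Z * H j Z"
  shows "Y = Z"
proof -
  define a where "a = H i Z"
  define b where "b = H j Z"
  define a' where "a' = H i Y"
  define b' where "b' = H j Y"
  have ab: "a > 0" "b > 0" using max_pos[OF Z] a_def b_def by auto
  have ab': "a' \<ge> 0" "b' \<ge> 0" using Y H_nonneg_P a'_def b'_def by auto
  have eq: "a' * b' = a * b" using Y a_def b_def a'_def b'_def by simp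
  define M where "M = (1/2) *\<^sub>R Y + (1/2) *\<^sub>R Z"
  have "M \<in> P" using Y Z P_convex by (simp add: M_def convex_def)
  hence "H i M * H j M \<le> a * b" using Z a_def b_def by simp
  moreover have "H i M = (a' + a) / 2" "H j M = (b' + b) / 2"
    by (simp_all add: M_def H_affine a_def a'_def b_def b'_def)
  ultimately have le: "(a' + a) * (b' + b) \<le> 4 * (a * b)" by simp
  have sq: "(a * b' - a' * b)^2 \<le> 0"
  proof -
    have "(a * b' - a' * b)^2 = (a * b' + a' * b)^2 - 4 * (a * b) * (a' * b')"
      by (simp add: power2_eq_square algebra_simps)
    also have "\<dots> = (a * b' + a' * b)^2 - (2 * (a * b))^2" using eq by (simp add: power2_eq_square)
    also have "\<dots> \<le> 0"
    proof -
      have "a * b' + a' * b \<le> 2 * (a * b)" using le eq by (simp add: algebra_simps)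
      moreover have "0 \<le> a * b' + a' * b" using ab ab' by simp
      ultimately have "(a * b' + a' * b)^2 \<le> (2 * (a * b))^2" by (intro power_mono)
      thus ?thesis by simp
    qed
    finally show ?thesis .
  qed
  hence e1: "a * b' = a' * b" by simp
  have "a * (a' * b') = a * (a * b)" using eq by simp
  hence "a' * (a' * b) = a * (a * b)" using e1 by (simp add: algebra_simps)
  hence "a' * a' = a * a" using ab by simp
  hence "a'^2 = a^2" by (simp add: power2_eq_square)
  hence "a' = a" using ab ab' power2_eq_iff_nonneg[of a' a] by simp
  hence "b' = b" using e1 ab by simp
  have c1: "cross2 (D i) (Y - Z) = 0"
    using \<open>a' = a\<close> a_def a'_def by (simp add: H_def cross2_simps cross2_anti[of "D i"])
  have c2: "cross2 (D j) (Y - Z) = 0"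
    using \<open>b' = b\<close> b_def b'_def by (simp add: H_def cross2_simps cross2_anti[of "D j"])
  show "Y = Z" using cross2_zero_vec[OF c1 c2 ij] by simp
qed

lemma first_order:
  assumes Z: "Z \<in> P" "\<forall>Y\<in>P. H i Y * H j Y \<le> H i Z * H j Z" and Y: "Y \<in> P"
  shows "H j Z * H i Y + H i Z * H j Y \<le> 2 * (H i Z * H j Z)"
proof (rule ccontr)
  define a where "a = H i Z"
  define b where "b = H j Z"
  define a' where "a' = H i Y"
  define b' where "b' = H j Y"
  define K where "K = b * a' + a * b' - 2 * (a * b)"
  define M where "M = (a' - a) * (b' - b)"
  assume "\<not> ?thesis"
  hence K: "K > 0" by (simp add: K_def a_def b_def a'_def b'_def)
  define e where "e = K / (K + \<bar>M\<bar>)"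
  have e0: "e > 0" "e \<le> 1" using K by (auto simp: e_def)
  define X where "X = (1 - e) *\<^sub>R Z + e *\<^sub>R Y"
  have "X \<in> P" using Z Y P_convex e0 by (simp add: X_def convex_def)
  hence "H i X * H j X \<le> a * b" using Z a_def b_def by simp
  moreover have "H i X = (1 - e) * a + e * a'" "H j X = (1 - e) * b + e * b'"
    by (simp_all add: X_def H_affine a_def a'_def b_def b'_def)
  ultimately have "((1 - e) * a + e * a') * ((1 - e) * b + e * b') \<le> a * b" by simp
  hence "e * K + e^2 * M \<le> 0" by (simp add: K_def M_def power2_eq_square algebra_simps)
  hence "e * (K + e * M) \<le> 0" by (simp add: power2_eq_square algebra_simps)
  hence le: "K + e * M \<le> 0" using e0 by (simp add: mult_le_0_iff)
  have "e * \<bar>M\<bar> < K"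
  proof -
    have "e * \<bar>M\<bar> = K * \<bar>M\<bar> / (K + \<bar>M\<bar>)" by (simp add: e_def)
    also have "\<dots> < K" using K by (simp add: divide_less_eq algebra_simps)
    finally show ?thesis .
  qed
  moreover have "- (e * \<bar>M\<bar>) \<le> e * M"
  proof -
    have "- \<bar>M\<bar> \<le> M" by linarith
    hence "e * (- \<bar>M\<bar>) \<le> e * M" using e0 by (intro mult_left_mono) auto
    thus ?thesis by simp
  qed
  ultimately show False using le by linarith
qed

lemma Zpt_char:
  assumes ij: "cross2 (D i) (D j) \<noteq> 0"
  shows "Zpt n v i j \<in> P \<and> (\<forall>Y\<in>P. H i Y * H j Y \<le> H i (Zpt n v i j) * H j (Zpt n v i j))"
proof -
  obtain Z where Z: "Z \<in> P" "\<forall>Y\<in>P. H i Y * H j Y \<le> H i Z * H j Z" using max_exists by blast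
  have c: "norm (D i) * norm (D j) > 0" using D_nz by simp
  have "Zpt n v i j = Z"
    unfolding Zpt_def
  proof (rule the_equality)
    show "Z \<in> P \<and> (\<forall>Y\<in>P. disprod (eline n v i) (eline n v j) Y \<le> disprod (eline n v i) (eline n v j) Z)"
      using Z c by (simp add: disprod_P divide_right_mono)
    fix X assume X: "X \<in> P \<and> (\<forall>Y\<in>P. disprod (eline n v i) (eline n v j) Y \<le> disprod (eline n v i) (eline n v j) X)"
    hence "disprod (eline n v i) (eline n v j) Z \<le> disprod (eline n v i) (eline n v j) X"
      using Z by blast
    hence "H i Z * H j Z / (norm (D i) * norm (D j)) \<le> H i X * H j X / (norm (D i) * norm (D j))"
      using Z X by (simp add: disprod_P)
    hence "H i Z * H j Z \<le> H i X * H j X" using c by (simp add: divide_le_cancel)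
    moreover have "H i X * H j X \<le> H i Z * H j Z" using Z X by auto
    ultimately show "X = Z" using max_unique[OF ij Z, of X] X by simp
  qed
  thus ?thesis using Z by simp
qed

lemma cross2_bc: "cross2 a b * cross2 c d - cross2 a d * cross2 c b = cross2 a c * cross2 b d"
  by (simp add: cross2_def algebra_simps)

lemma W_pred: "W (k + n - 1) + D (k + n - 1) = W k"
proof -
  have "W (k + n - 1) + D (k + n - 1) = W (Suc (k + n - 1))" by (simp add: W_Suc)
  also have "Suc (k + n - 1) = k + n" using npos by simp
  finally show ?thesis by (simp add: W_n)
qed

text \<open>Adjacency: two non-adjacent vertices cannot both maximise an affine function
  with nonzero gradient Dv.\<close>
lemma max_adjacent:
  assumes Dv: "Dv \<noteq> 0"
    and ab: "cross2 (W b - W a) Dv = 0"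
    and amax1: "cross2 (D a) Dv \<le> 0"
    and amax2: "cross2 (W (a + n - 1) - W a) Dv \<le> 0"
    and b1: "b mod n \<noteq> a mod n" "b mod n \<noteq> Suc a mod n" "b mod n \<noteq> (a + n - 1) mod n"
  shows False
proof -
  define u where "u = D a"
  define w where "w = W (a + n - 1) - W a"
  define x where "x = W b - W a"
  have w': "w = - D (a + n - 1)" using W_pred[of a] by (simp add: w_def algebra_simps)
  have ux: "cross2 u x < 0" using conv[of b a] b1 by (simp add: u_def x_def)
  have "Suc (a + n - 1) mod n = a mod n"
  proof -
    have "Suc (a + n - 1) = a + n" using npos by simp
    thus ?thesis by simp
  qed
  hence "cross2 (D (a + n - 1)) (W b - W (a + n - 1)) < 0" using conv[of b "a + n - 1"] b1 by simp
  moreover have "W b - W (a + n - 1) = x + D (a + n - 1)" using W_pred[of a] by (simp add: x_def algebra_simps)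
  ultimately have "cross2 (D (a + n - 1)) (x + D (a + n - 1)) < 0" by metis
  hence "cross2 (D (a + n - 1)) x < 0" by (simp only: cross2_simps)
  hence wx: "cross2 w x > 0" by (simp add: w' cross2_simps)
  have uw: "cross2 u w \<noteq> 0"
  proof -
    have "(a + n - 1) mod n \<noteq> a mod n" using offs_ne[of "n - 1" 0 a] n3 by (simp add: add_diff_assoc)
    hence "cross2 (D (a + n - 1)) (D a) \<noteq> 0" using nonpar by blast
    thus ?thesis by (simp add: u_def w' cross2_simps cross2_anti[of "D a"])
  qed
  have id: "cross2 u x * cross2 w Dv - cross2 u Dv * cross2 w x = cross2 u w * cross2 x Dv"
    by (rule cross2_bc)
  hence "cross2 u x * cross2 w Dv - cross2 u Dv * cross2 w x = 0" using ab by (simp add: x_def)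
  moreover have "cross2 u x * cross2 w Dv \<ge> 0" using ux amax2 by (simp add: w_def mult_nonpos_nonpos)
  moreover have "cross2 u Dv * cross2 w x \<le> 0" using amax1 wx by (simp add: u_def mult_nonpos_nonneg)
  ultimately have "cross2 u x * cross2 w Dv = 0" "cross2 u Dv * cross2 w x = 0" by linarith+
  hence "cross2 w Dv = 0" "cross2 u Dv = 0" using ux wx by auto
  hence "Dv = 0" using cross2_zero_vec[of u Dv w] uw by (simp add: cross2_anti[of w u])
  thus False using Dv by simp
qed


end


context cp begin

lemma W_in_S: "W k \<in> v ` {..<n}" using npos by (simp add: vtx_def)

lemma hull_loc:
  fixes G :: "real^2 \<Rightarrow> real"
  assumes Dv: "Dv \<noteq> 0" and Gaff: "\<And>X Y. G Y - G X = cross2 (Y - X) Dv"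
    and Z: "Z \<in> P" and Zmax: "\<forall>Y\<in>P. G Y \<le> G Z"
  shows "\<exists>c lam. 0 \<le> lam \<and> lam \<le> 1 \<and> Z = W c + lam *\<^sub>R D c \<and>
           (lam < 1 \<longrightarrow> G (W c) = G Z) \<and> (0 < lam \<longrightarrow> G (W (Suc c)) = G Z)"
proof -
  define S where "S = v ` {..<n}"
  have fS: "finite S" by (simp add: S_def)
  obtain u where u0: "\<forall>x\<in>S. 0 \<le> u x" and u1: "sum u S = 1" and uZ: "(\<Sum>x\<in>S. u x *\<^sub>R x) = Z"
    using Z unfolding poly_def S_def[symmetric] convex_hull_finite[OF fS] by blast
  have SP: "x \<in> S \<Longrightarrow> x \<in> P" for x by (simp add: S_def poly_def hull_inc)
  have "(\<Sum>x\<in>S. u x *\<^sub>R (x - Z)) = Z - Z"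
    using u1 uZ by (simp add: scaleR_diff_right sum_subtractf scaleR_sum_left[symmetric])
  hence "cross2 (\<Sum>x\<in>S. u x *\<^sub>R (x - Z)) Dv = 0" by (simp add: cross2_def)
  hence "(\<Sum>x\<in>S. u x * cross2 (x - Z) Dv) = 0" using fS by (simp add: cross2_sum cross2_simps)
  moreover have "u x * (G Z - G x) = - (u x * cross2 (x - Z) Dv)" for x
  proof -
    have "G Z - G x = cross2 (Z - x) Dv" by (rule Gaff)
    also have "\<dots> = - cross2 (x - Z) Dv" by (simp add: cross2_simps)
    finally show ?thesis by simp
  qed
  ultimately have s0: "(\<Sum>x\<in>S. u x * (G Z - G x)) = 0" by (simp add: sum_negf)
  have nn: "\<forall>x\<in>S. u x * (G Z - G x) \<ge> 0"
  proof
    fix x assume x: "x \<in> S"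
    have "G x \<le> G Z" using Zmax SP[OF x] by blast
    thus "u x * (G Z - G x) \<ge> 0" using u0 x by simp
  qed
  have term0: "\<forall>x\<in>S. u x * (G Z - G x) = 0"
    using sum_nonneg_eq_0_iff[OF fS, of "\<lambda>x. u x * (G Z - G x)"] s0 nn by simp
  define T where "T = {x\<in>S. u x > 0}"
  have Tmax: "x \<in> T \<Longrightarrow> G x = G Z" for x using term0 by (auto simp: T_def)
  have "T \<noteq> {}"
  proof
    assume "T = {}"
    hence "\<forall>x\<in>S. u x = 0" using u0 by (force simp: T_def)
    thus False using u1 by simp
  qed
  then obtain x0 where "x0 \<in> T" by blast
  then obtain m where "m < n" "x0 = v m" by (auto simp: T_def S_def)
  hence m: "W m \<in> T" using \<open>x0 \<in> T\<close> by (simp add: vtx_def)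
  have GmZ: "G (W m) = G Z" using Tmax m by simp
  have m1: "cross2 (D m) Dv \<le> 0"
  proof -
    have "G (W (Suc m)) - G (W m) = cross2 (W (Suc m) - W m) Dv" by (rule Gaff)
    moreover have "W (Suc m) - W m = D m" by (simp add: W_Suc)
    moreover have "G (W (Suc m)) \<le> G Z" using Zmax W_in_P by blast
    ultimately show ?thesis using GmZ by simp
  qed
  have m2: "cross2 (W (m + n - 1) - W m) Dv \<le> 0"
  proof -
    have "G (W (m + n - 1)) - G (W m) = cross2 (W (m + n - 1) - W m) Dv" by (rule Gaff)
    moreover have "G (W (m + n - 1)) \<le> G Z" using Zmax W_in_P by blast
    ultimately show ?thesis using GmZ by simp
  qed
  have adj: "b mod n = m mod n \<or> b mod n = Suc m mod n \<or> b mod n = (m + n - 1) mod n" if "W b \<in> T" for b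
  proof (rule ccontr)
    assume "\<not> ?thesis"
    moreover have "cross2 (W b - W m) Dv = 0"
    proof -
      have "G (W b) - G (W m) = cross2 (W b - W m) Dv" by (rule Gaff)
      thus ?thesis using Tmax[OF that] GmZ by simp
    qed
    ultimately show False using max_adjacent[OF Dv _ m1 m2] by blast
  qed
  have Tidx: "x \<in> T \<Longrightarrow> \<exists>b. x = W b" for x
  proof -
    assume "x \<in> T"
    then obtain b where "b < n" "x = v b" by (auto simp: T_def S_def)
    thus ?thesis by (metis vtx_def mod_less)
  qed
  have "\<exists>c. T \<subseteq> {W c, W (Suc c)}"
  proof (cases "W (Suc m) \<in> T")
    case True
    have "W (m + n - 1) \<notin> T"
    proof
      assume h: "W (m + n - 1) \<in> T"
      have "cross2 (D m) Dv = 0"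
      proof -
        have "G (W (Suc m)) - G (W m) = cross2 (W (Suc m) - W m) Dv" by (rule Gaff)
        thus ?thesis using Tmax[OF True] GmZ by (simp add: W_Suc)
      qed
      moreover have "cross2 (D (m + n - 1)) Dv = 0"
      proof -
        have "G (W m) - G (W (m + n - 1)) = cross2 (W m - W (m + n - 1)) Dv" by (rule Gaff)
        moreover have "W m - W (m + n - 1) = D (m + n - 1)" using W_pred[of m] by (simp add: algebra_simps)
        ultimately show ?thesis using Tmax[OF h] GmZ by simp
      qed
      moreover have "cross2 (D m) (D (m + n - 1)) \<noteq> 0"
        using nonpar offs_ne[of 0 "n - 1" m] n3 by (simp add: add_diff_assoc)
      ultimately show False using cross2_zero_vec Dv by blast
    qed
    have "T \<subseteq> {W m, W (Suc m)}"
    proof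
      fix x assume x: "x \<in> T"
      then obtain b where b: "x = W b" using Tidx by blast
      hence "b mod n = m mod n \<or> b mod n = Suc m mod n \<or> b mod n = (m + n - 1) mod n" using adj x by simp
      hence "W b = W m \<or> W b = W (Suc m) \<or> W b = W (m + n - 1)" by (metis W_mod)
      thus "x \<in> {W m, W (Suc m)}" using b x \<open>W (m + n - 1) \<notin> T\<close> by auto
    qed
    thus ?thesis by blast
  next
    case False
    have "T \<subseteq> {W (m + n - 1), W (Suc (m + n - 1))}"
    proof
      fix x assume x: "x \<in> T"
      then obtain b where b: "x = W b" using Tidx by blast
      hence "b mod n = m mod n \<or> b mod n = Suc m mod n \<or> b mod n = (m + n - 1) mod n" using adj x by simp
      hence "W b = W m \<or> W b = W (Suc m) \<or> W b = W (m + n - 1)" by (metis W_mod)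
      moreover have "W (Suc (m + n - 1)) = W m" using W_pred[of m] by (simp add: W_Suc)
      ultimately show "x \<in> {W (m + n - 1), W (Suc (m + n - 1))}" using b x False by auto
    qed
    thus ?thesis by blast
  qed
  then obtain c where Tc: "T \<subseteq> {W c, W (Suc c)}" by blast
  define A where "A = {W c, W (Suc c)}"
  have AS: "A \<subseteq> S" using W_in_S by (simp add: A_def S_def)
  have zero: "\<forall>x\<in>S - A. u x = 0" using Tc u0 by (force simp: T_def A_def)
  have ne: "W c \<noteq> W (Suc c)" using D_nz[of c] by (simp add: W_Suc)
  have "sum u S = sum u A" using sum.mono_neutral_right[OF fS AS] zero by simp
  hence s1: "u (W c) + u (W (Suc c)) = 1" using u1 ne by (simp add: A_def)
  have "(\<Sum>x\<in>S. u x *\<^sub>R x) = (\<Sum>x\<in>A. u x *\<^sub>R x)"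
    using sum.mono_neutral_right[OF fS AS, of "\<lambda>x. u x *\<^sub>R x"] zero by simp
  hence "Z = u (W c) *\<^sub>R W c + u (W (Suc c)) *\<^sub>R W (Suc c)" using uZ ne by (simp add: A_def)
  also have "\<dots> = W c + u (W (Suc c)) *\<^sub>R D c"
    using s1 by (simp add: W_Suc algebra_simps scaleR_add_left[symmetric])
  finally have Zeq: "Z = W c + u (W (Suc c)) *\<^sub>R D c" .
  have "u (W (Suc c)) \<ge> 0" "u (W c) \<ge> 0" using u0 W_in_S unfolding S_def by blast+
  hence l0: "0 \<le> u (W (Suc c))" "u (W (Suc c)) \<le> 1" using s1 by auto
  have "u (W (Suc c)) < 1 \<longrightarrow> G (W c) = G Z"
  proof
    assume "u (W (Suc c)) < 1"
    hence "u (W c) > 0" using s1 by simp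
    thus "G (W c) = G Z" using Tmax W_in_S by (simp add: T_def S_def)
  qed
  moreover have "0 < u (W (Suc c)) \<longrightarrow> G (W (Suc c)) = G Z"
    using Tmax W_in_S by (simp add: T_def S_def)
  ultimately show ?thesis using Zeq l0 by blast
qed

end



lemma offset_exists: "0 < (n::nat) \<Longrightarrow> \<exists>mu<n. (s + mu) mod n = c mod n"
proof -
  assume n: "0 < n"
  define mu where "mu = (c mod n + (n - s mod n)) mod n"
  have "(s + mu) mod n = (s mod n + mu) mod n" by (simp add: mod_add_left_eq)
  also have "\<dots> = (s mod n + (c mod n + (n - s mod n))) mod n" by (simp add: mu_def mod_add_right_eq)
  also have "s mod n + (c mod n + (n - s mod n)) = c mod n + n"
  proof -
    have "s mod n < n" using n by simp
    thus ?thesis by linarith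
  qed
  also have "(c mod n + n) mod n = c mod n" by simp
  finally have "(s + mu) mod n = c mod n" .
  moreover have "mu < n" using n by (simp add: mu_def)
  ultimately show ?thesis by blast
qed

locale rng = cp +
  fixes s L :: nat
  assumes L_lt: "L < n" and L_pos: "1 \<le> L" and sneg: "cross2 (D s) (D (s + L)) < 0"
begin

lemma ord: "a < b \<Longrightarrow> b \<le> L \<Longrightarrow> cross2 (D (s + a)) (D (s + b)) < 0"
  using chain[OF L_lt sneg] by blast

lemma L_le: "L \<le> n - 2"
proof (rule ccontr)
  assume "\<not> ?thesis"
  hence L: "L = n - 1" using L_lt by simp
  have "Suc (s + n - 1) = s + n" using n3 by simp
  hence "cross2 (D (s + n - 1)) (D (s + n)) < 0" using turn[of "s + n - 1"] by simp
  hence "cross2 (D (s + L)) (D s) < 0" using L D_n n3 by (simp add: add_diff_assoc)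
  thus False using sneg cross2_anti[of "D s"] by simp
qed

lemma e_neg: "k \<le> L \<Longrightarrow> cross2 (D s - D (s + L)) (D (s + k)) < 0"
proof -
  assume k: "k \<le> L"
  have "cross2 (D s - D (s + L)) (D (s + k)) = cross2 (D s) (D (s + k)) + cross2 (D (s + k)) (D (s + L))"
    by (simp add: cross2_simps cross2_anti[of "D (s + L)"])
  moreover have "cross2 (D s) (D (s + k)) \<le> 0"
    using ord[of 0 k] k by (cases "k = 0") (auto simp: cross2_simps)
  moreover have "cross2 (D (s + k)) (D (s + L)) \<le> 0"
    using ord[of k L] k by (cases "k = L") (auto simp: cross2_simps)
  moreover have "k = 0 \<Longrightarrow> cross2 (D (s + k)) (D (s + L)) < 0" using sneg by simp
  moreover have "0 < k \<Longrightarrow> cross2 (D s) (D (s + k)) < 0" using ord[of 0 k] k by simp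
  ultimately show ?thesis by (cases "k = 0") linarith+
qed

lemma H_diff: "H k Y - H k X = cross2 (Y - X) (D k)"
  by (simp add: H_def cross2_simps)

lemma vertex_excl:
  assumes ab: "a > 0" "b > 0" and al: "al \<le> L" and be: "be \<le> L"
    and mu: "1 \<le> mu" "mu \<le> L"
    and vmax: "\<forall>k. cross2 (W k - W (s + mu)) (b *\<^sub>R D (s + al) + a *\<^sub>R D (s + be)) \<le> 0"
  shows False
proof -
  define Dv where "Dv = b *\<^sub>R D (s + al) + a *\<^sub>R D (s + be)"
  define e where "e = D s - D (s + L)"
  define x where "x = D (s + mu - 1)"
  define z where "z = D (s + mu)"
  have sm: "Suc (s + mu - 1) = s + mu" using mu by simp
  have "cross2 (W (s + mu - 1) - W (s + mu)) Dv \<le> 0" using vmax Dv_def by blast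
  moreover have "W (s + mu) = W (s + mu - 1) + x" using W_Suc[of "s + mu - 1"] sm x_def by simp
  ultimately have xD: "cross2 x Dv \<ge> 0" by (simp add: cross2_simps)
  have "cross2 (W (Suc (s + mu)) - W (s + mu)) Dv \<le> 0" using vmax Dv_def by blast
  hence zD: "cross2 z Dv \<le> 0" by (simp add: W_Suc z_def)
  have eD: "cross2 e Dv < 0"
  proof -
    have "cross2 e Dv = b * cross2 e (D (s + al)) + a * cross2 e (D (s + be))"
      by (simp add: Dv_def cross2_simps)
    moreover have "cross2 e (D (s + al)) < 0" "cross2 e (D (s + be)) < 0"
      using e_neg al be e_def by auto
    ultimately show ?thesis using ab by (simp add: add_neg_neg mult_pos_neg)
  qed
  have ex: "cross2 e x < 0" using e_neg[of "mu - 1"] mu by (simp add: e_def x_def add_diff_assoc)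
  have ez: "cross2 e z < 0" using e_neg[of mu] mu by (simp add: e_def z_def)
  have xz: "cross2 x z < 0" using turn[of "s + mu - 1"] sm by (simp add: x_def z_def)
  have "cross2 e Dv * cross2 x z = cross2 e x * cross2 Dv z + cross2 e z * cross2 x Dv"
    by (rule cross2_jac)
  moreover have "cross2 e Dv * cross2 x z > 0" using eD xz by (simp add: mult_neg_neg)
  moreover have "cross2 e x * cross2 Dv z \<le> 0"
    using ex zD by (simp add: cross2_anti[of Dv z] mult_nonpos_nonpos)
  moreover have "cross2 e z * cross2 x Dv \<le> 0" using ez xD by (simp add: mult_le_0_iff)
  ultimately show False by linarith
qed

lemma Z_loc:
  assumes albe: "al < be" "be \<le> L"
    and Z: "Z \<in> P" "\<forall>Y\<in>P. H (s + al) Y * H (s + be) Y \<le> H (s + al) Z * H (s + be) Z"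
  shows "\<exists>mu lam. L + 1 \<le> mu \<and> 0 \<le> lam \<and> lam \<le> 1 \<and> real mu + lam \<le> real n \<and>
           Z = W (s + mu) + lam *\<^sub>R D (s + mu)"
proof -
  define i where "i = s + al"
  define j where "j = s + be"
  define a where "a = H i Z"
  define b where "b = H j Z"
  have ab: "a > 0" "b > 0" using max_pos[of Z i j] Z by (auto simp: a_def b_def i_def j_def)
  define G where "G = (\<lambda>Y. b * H i Y + a * H j Y)"
  define Dv where "Dv = b *\<^sub>R D i + a *\<^sub>R D j"
  have Gaff: "G Y - G X = cross2 (Y - X) Dv" for X Y
  proof -
    have "G Y - G X = b * (H i Y - H i X) + a * (H j Y - H j X)" by (simp add: G_def algebra_simps)
    thus ?thesis by (simp add: H_diff Dv_def cross2_simps)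
  qed
  have ij: "cross2 (D i) (D j) < 0" using ord albe by (simp add: i_def j_def)
  have Dv: "Dv \<noteq> 0"
  proof
    assume "Dv = 0"
    hence "cross2 (D i) Dv = 0" by (simp add: cross2_def)
    moreover have "cross2 (D i) Dv = a * cross2 (D i) (D j)" by (simp add: Dv_def cross2_simps)
    ultimately show False using ab ij by simp
  qed
  have Gmax: "\<forall>Y\<in>P. G Y \<le> G Z"
  proof
    fix Y assume "Y \<in> P"
    hence "H j Z * H i Y + H i Z * H j Y \<le> 2 * (H i Z * H j Z)"
      using first_order[of Z i j Y] Z by (simp add: i_def j_def)
    thus "G Y \<le> G Z" by (simp add: G_def a_def b_def algebra_simps)
  qed
  obtain c lam where cl: "0 \<le> lam" "lam \<le> 1" "Z = W c + lam *\<^sub>R D c"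
      "lam < 1 \<longrightarrow> G (W c) = G Z" "0 < lam \<longrightarrow> G (W (Suc c)) = G Z"
    using hull_loc[OF Dv Gaff Z(1) Gmax] by blast
  obtain mu0 where mu0: "mu0 < n" "(s + mu0) mod n = c mod n" using offset_exists[OF npos] by blast
  have Wc: "W c = W (s + mu0)" "D c = D (s + mu0)" "W (Suc c) = W (s + Suc mu0)"
    using mu0 by (metis W_mod, metis D_mod, metis W_mod mod_Suc_eq add_Suc_right)
  have vmax_of: "\<not> (1 \<le> m \<and> m \<le> L)" if "G (W (s + m)) = G Z" for m
  proof
    assume m: "1 \<le> m \<and> m \<le> L"
    have "\<forall>k. cross2 (W k - W (s + m)) (b *\<^sub>R D (s + al) + a *\<^sub>R D (s + be)) \<le> 0"
    proof
      fix k
      have "G (W k) \<le> G Z" using Gmax W_in_P by blast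
      moreover have "G (W k) - G (W (s + m)) = cross2 (W k - W (s + m)) Dv" by (rule Gaff)
      ultimately show "cross2 (W k - W (s + m)) (b *\<^sub>R D (s + al) + a *\<^sub>R D (s + be)) \<le> 0"
        using that by (simp add: Dv_def i_def j_def)
    qed
    thus False using vertex_excl[OF ab(1) ab(2), of al be m] albe m by simp
  qed
  have WsN: "W (s + n) = W s" by (rule W_n)
  show ?thesis
  proof (cases "lam = 1")
    case True
    hence Zv: "Z = W (s + Suc mu0)" using cl Wc by (simp add: W_Suc[symmetric])
    have G1: "G (W (s + Suc mu0)) = G Z" using cl True Wc by simp
    show ?thesis
    proof (cases "Suc mu0 = n")
      case True
      thus ?thesis using Zv L_lt by (intro exI[of _ n] exI[of _ 0]) auto
    next
      case False
      hence "L + 1 \<le> Suc mu0" using vmax_of[OF G1] by auto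
      thus ?thesis using Zv False mu0 by (intro exI[of _ "Suc mu0"] exI[of _ 0]) auto
    qed
  next
    case False
    hence l1: "lam < 1" using cl by simp
    have G0: "G (W (s + mu0)) = G Z" using cl l1 Wc by simp
    show ?thesis
    proof (cases "lam = 0")
      case True
      show ?thesis
      proof (cases "mu0 = 0")
        case True
        thus ?thesis using cl \<open>lam = 0\<close> Wc WsN L_lt by (intro exI[of _ n] exI[of _ 0]) auto
      next
        case False
        hence "L + 1 \<le> mu0" using vmax_of[OF G0] by auto
        thus ?thesis using cl \<open>lam = 0\<close> Wc mu0 by (intro exI[of _ mu0] exI[of _ 0]) auto
      qed
    next
      case False
      hence G1: "G (W (s + Suc mu0)) = G Z" using cl Wc by simp
      have "mu0 \<noteq> 0" using vmax_of[OF G1] L_pos by auto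
      hence "L + 1 \<le> mu0" using vmax_of[OF G0] by auto
      moreover have "real mu0 + lam \<le> real n" using mu0 l1 by linarith
      ultimately show ?thesis using cl Wc by (intro exI[of _ mu0] exI[of _ lam]) auto
    qed
  qed
qed

lemma Qneg:
  assumes al: "al < al'" "al' \<le> L" and mu: "L + 1 \<le> mu" "mu \<le> n - 1"
  shows "H (s + al') (W (s + mu)) * cross2 (D (s + mu)) (D (s + al))
         - H (s + al) (W (s + mu)) * cross2 (D (s + mu)) (D (s + al')) \<le> 0"
proof -
  define i where "i = s + al"
  define i' where "i' = s + al'"
  define k where "k = s + mu"
  define ka where "ka = cross2 (D i) (D i')"
  have ka: "ka < 0" using ord al by (simp add: ka_def i_def i'_def)
  define tau where "tau = H i' (W i) / (- ka)"
  define I where "I = W i + tau *\<^sub>R D i"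
  have HiI: "H i I = 0" by (simp add: I_def H_add H_W_self cross2_simps)
  have "H i' I = H i' (W i) + tau * ka" by (simp only: I_def H_add ka_def cross2_simps)
  moreover have "tau * ka = - H i' (W i)" using ka by (simp add: tau_def)
  ultimately have Hi'I: "H i' I = 0" by simp
  have repi: "H i X = cross2 (X - I) (D i)" for X using H_diff[of i X I] HiI by simp
  have repi': "H i' X = cross2 (X - I) (D i')" for X using H_diff[of i' X I] Hi'I by simp
  have Q: "H i' (W k) * cross2 (D k) (D i) - H i (W k) * cross2 (D k) (D i') = H k I * ka"
  proof -
    have "H i' (W k) * cross2 (D k) (D i) - H i (W k) * cross2 (D k) (D i')
        = cross2 (W k - I) (D i') * cross2 (D k) (D i) - cross2 (W k - I) (D i) * cross2 (D k) (D i')"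
      by (simp add: repi repi')
    also have "\<dots> = cross2 (W k - I) (D k) * cross2 (D i') (D i)" by (rule cross2_bc)
    also have "\<dots> = H k I * ka"
      by (simp add: H_def ka_def cross2_simps cross2_anti[of "D i'"] cross2_anti[of "W k"] cross2_anti[of I] algebra_simps)
    finally show ?thesis .
  qed
  have HkI: "H k I \<ge> 0"
  proof (cases "cross2 (D i) (D k) \<ge> 0")
    case True
    have "H i' (W (Suc i)) = H i' (W i) + ka" by (simp add: W_Suc H_add ka_def)
    hence "H i' (W i) + ka \<ge> 0" using H_W_nonneg by metis
    hence t1: "tau - 1 \<ge> 0" using ka by (simp add: tau_def field_simps)
    have "I = W (Suc i) + (tau - 1) *\<^sub>R D i" by (simp add: I_def W_Suc algebra_simps)
    hence "H k I = H k (W (Suc i)) + (tau - 1) * cross2 (D i) (D k)" by (simp add: H_add cross2_simps)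
    moreover have "H k (W (Suc i)) \<ge> 0" by (rule H_W_nonneg)
    ultimately show ?thesis using t1 True by simp
  next
    case F1: False
    show ?thesis
    proof (cases "cross2 (D i') (D k) \<le> 0")
      case True
      define sg where "sg = H i (W i') / ka"
      define I' where "I' = W i' + sg *\<^sub>R D i'"
      have "H i I' = H i (W i') + sg * cross2 (D i') (D i)" by (simp add: I'_def H_add cross2_simps)
      also have "\<dots> = 0" using ka by (simp add: sg_def ka_def cross2_anti[of "D i'"])
      finally have HiI': "H i I' = 0" .
      have Hi'I': "H i' I' = 0" by (simp add: I'_def H_add H_W_self cross2_simps)
      have "cross2 (D i) (I - I') = 0"
        using H_diff[of i I I'] HiI HiI' by (simp add: cross2_anti[of "D i"])
      moreover have "cross2 (D i') (I - I') = 0"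
        using H_diff[of i' I I'] Hi'I Hi'I' by (simp add: cross2_anti[of "D i'"])
      ultimately have "I - I' = 0" using cross2_zero_vec[of "D i" "I - I'" "D i'"] ka by (simp add: ka_def)
      hence "I = I'" by simp
      hence "H k I = H k (W i') + sg * cross2 (D i') (D k)" by (simp add: I'_def H_add cross2_simps)
      moreover have "H k (W i') \<ge> 0" by (rule H_W_nonneg)
      moreover have "sg \<le> 0" using ka H_W_nonneg[of i i'] by (simp add: sg_def divide_nonneg_neg)
      ultimately show ?thesis using True by (simp add: mult_nonpos_nonpos)
    next
      case False2: False
      have "cross2 (D i) (D (i + (mu - al))) < 0" using F1 al mu by (simp add: i_def k_def)
      moreover have "mu - al < n" using mu n3 by linarith
      ultimately have "cross2 (D (i + (al' - al))) (D (i + (mu - al))) < 0"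
        using chain[of "mu - al" i "al' - al" "mu - al"] al mu by linarith
      hence "cross2 (D i') (D k) < 0" using al mu by (simp add: i_def i'_def k_def)
      thus ?thesis using False2 by simp
    qed
  qed
  show ?thesis using Q HkI ka by (simp add: i_def i'_def k_def mult_nonneg_nonpos)
qed

definition rp :: "nat \<Rightarrow> real \<Rightarrow> real^2" where "rp mu lam = W (s + mu) + lam *\<^sub>R D (s + mu)"

lemma rp_P: "0 \<le> lam \<Longrightarrow> lam \<le> 1 \<Longrightarrow> rp mu lam \<in> P"
proof -
  assume l: "0 \<le> lam" "lam \<le> 1"
  have "rp mu lam = (1 - lam) *\<^sub>R W (s + mu) + lam *\<^sub>R W (Suc (s + mu))"
    by (simp add: rp_def W_Suc algebra_simps)
  thus ?thesis using P_convex W_in_P l by (simp add: convex_def)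
qed

lemma rp_1: "rp mu 1 = rp (Suc mu) 0" by (simp add: rp_def W_Suc)

lemma H_rp: "H k (rp mu lam) = H k (W (s + mu)) + lam * cross2 (D (s + mu)) (D k)"
  by (simp add: rp_def H_add cross2_simps)

lemma trans_ratio:
  fixes a A b B c C :: real
  assumes "a * B - b * A \<le> 0" "b * C - c * B \<le> 0" "B > 0" "A \<ge> 0" "C \<ge> 0"
  shows "a * C - c * A \<le> 0"
proof -
  have "a * B * C \<le> b * A * C" using assms(1,5) by (simp add: mult_right_mono)
  moreover have "b * C * A \<le> c * B * A" using assms(2,4) by (simp add: mult_right_mono)
  ultimately have "B * (a * C - c * A) \<le> 0" by (simp add: algebra_simps)
  thus ?thesis using assms(3) by (simp add: mult_le_0_iff)
qed

lemma same_edge: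
  assumes al: "al < al'" "al' \<le> L" and mu: "L + 1 \<le> mu" "mu \<le> n - 1" and l: "l1 \<le> l2"
  shows "H (s + al') (rp mu l1) * H (s + al) (rp mu l2) - H (s + al') (rp mu l2) * H (s + al) (rp mu l1) \<le> 0"
proof -
  define Q where "Q = H (s + al') (W (s + mu)) * cross2 (D (s + mu)) (D (s + al))
         - H (s + al) (W (s + mu)) * cross2 (D (s + mu)) (D (s + al'))"
  have "H (s + al') (rp mu l1) * H (s + al) (rp mu l2) - H (s + al') (rp mu l2) * H (s + al) (rp mu l1)
        = (l2 - l1) * Q"
    by (simp add: H_rp Q_def algebra_simps)
  moreover have "Q \<le> 0" using Qneg[OF al mu] by (simp add: Q_def)
  ultimately show ?thesis using l by (simp add: mult_nonneg_nonpos)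
qed

lemma ratio_aux:
  assumes al: "al < al'" "al' \<le> L"
  shows "\<forall>mu1 mu2 l1 l2. mu2 = mu1 + d \<and> L + 1 \<le> mu1 \<and> 0 \<le> l1 \<and> l1 \<le> 1 \<and> 0 \<le> l2 \<and> l2 \<le> 1 \<and>
     real mu2 + l2 \<le> real n \<and> real mu1 + l1 \<le> real mu2 + l2 \<longrightarrow>
     H (s + al') (rp mu1 l1) * H (s + al) (rp mu2 l2) - H (s + al') (rp mu2 l2) * H (s + al) (rp mu1 l1) \<le> 0"
proof (induction d)
  case 0
  show ?case
  proof (intro allI impI)
    fix mu1 mu2 :: nat and l1 l2 :: real
    assume h: "mu2 = mu1 + 0 \<and> L + 1 \<le> mu1 \<and> 0 \<le> l1 \<and> l1 \<le> 1 \<and> 0 \<le> l2 \<and> l2 \<le> 1 \<and>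
     real mu2 + l2 \<le> real n \<and> real mu1 + l1 \<le> real mu2 + l2"
    show "H (s + al') (rp mu1 l1) * H (s + al) (rp mu2 l2) - H (s + al') (rp mu2 l2) * H (s + al) (rp mu1 l1) \<le> 0"
    proof (cases "mu1 \<le> n - 1")
      case True
      thus ?thesis using same_edge[OF al, of mu1 l1 l2] h by auto
    next
      case False
      have "real mu1 \<le> real n" using h by linarith
      hence m: "mu1 = n" using False by linarith
      hence "l2 = 0" using h by simp
      hence "l1 = 0" using h m by simp
      hence "l1 = l2" using \<open>l2 = 0\<close> by simp
      moreover have "mu1 = mu2" using h by simp
      ultimately have "rp mu1 l1 = rp mu2 l2" by simp
      thus ?thesis by simp
    qed
  qed
next
  case (Suc d)
  show ?case
  proof (intro allI impI)
    fix mu1 mu2 :: nat and l1 l2 :: real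
    assume h: "mu2 = mu1 + Suc d \<and> L + 1 \<le> mu1 \<and> 0 \<le> l1 \<and> l1 \<le> 1 \<and> 0 \<le> l2 \<and> l2 \<le> 1 \<and>
     real mu2 + l2 \<le> real n \<and> real mu1 + l1 \<le> real mu2 + l2"
    show "H (s + al') (rp mu1 l1) * H (s + al) (rp mu2 l2) - H (s + al') (rp mu2 l2) * H (s + al) (rp mu1 l1) \<le> 0"
    proof (cases "d = 0 \<and> l2 = 0")
      case True
      hence "rp mu2 l2 = rp mu1 1" using h rp_1 by simp
      moreover have "mu1 \<le> n - 1" using h True by linarith
      ultimately show ?thesis using same_edge[OF al, of mu1 l1 1] h by auto
    next
      case False
      have m1: "mu1 + 1 \<le> n - 1"
      proof (cases "d = 0")
        case True
        hence "l2 > 0" using False h by auto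
        thus ?thesis using h True by linarith
      next
        case False
        thus ?thesis using h by linarith
      qed
      define V where "V = rp mu1 1"
      have V2: "V = rp (Suc mu1) 0" using rp_1 V_def by simp
      have e1: "H (s + al') (rp mu1 l1) * H (s + al) V - H (s + al') V * H (s + al) (rp mu1 l1) \<le> 0"
        using same_edge[OF al, of mu1 l1 1] h m1 V_def by auto
      have e2: "H (s + al') V * H (s + al) (rp mu2 l2) - H (s + al') (rp mu2 l2) * H (s + al) V \<le> 0"
      proof -
        have "real (Suc mu1) \<le> real mu2" using h by simp
        hence "mu2 = Suc mu1 + d \<and> L + 1 \<le> Suc mu1 \<and> 0 \<le> (0::real) \<and> (0::real) \<le> 1 \<and> 0 \<le> l2 \<and> l2 \<le> 1 \<and>
          real mu2 + l2 \<le> real n \<and> real (Suc mu1) + 0 \<le> real mu2 + l2" using h by simp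
        hence "H (s + al') (rp (Suc mu1) 0) * H (s + al) (rp mu2 l2) - H (s + al') (rp mu2 l2) * H (s + al) (rp (Suc mu1) 0) \<le> 0"
          using Suc.IH by blast
        thus ?thesis using V2 by simp
      qed
      have "H (s + al) V > 0"
      proof -
        have "V = W (s + Suc mu1)" by (simp add: V2 rp_def)
        moreover have "(s + Suc mu1) mod n \<noteq> (s + al) mod n"
          using offs_ne[of "Suc mu1" al s] h m1 al by linarith
        moreover have "(s + Suc mu1) mod n \<noteq> (s + Suc al) mod n"
          using offs_ne[of "Suc mu1" "Suc al" s] h m1 al by linarith
        ultimately show ?thesis using H_W_pos by simp
      qed
      moreover have "H (s + al) (rp mu1 l1) \<ge> 0" "H (s + al) (rp mu2 l2) \<ge> 0"
        using rp_P H_nonneg_P h by auto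
      ultimately show ?thesis using trans_ratio[OF e1 e2] by simp
    qed
  qed
qed

lemma ratio:
  assumes al: "al \<le> al'" "al' \<le> L" and mu: "L + 1 \<le> mua" "mua \<le> mub"
    and l: "0 \<le> la" "la \<le> 1" "0 \<le> lb" "lb \<le> 1" "real mub + lb \<le> real n" "real mua + la \<le> real mub + lb"
  shows "H (s + al') (rp mua la) * H (s + al) (rp mub lb) \<le> H (s + al') (rp mub lb) * H (s + al) (rp mua la)"
proof (cases "al = al'")
  case True thus ?thesis by (simp add: mult.commute)
next
  case False
  hence "al < al'" using al by simp
  have "mub = mua + (mub - mua) \<and> L + 1 \<le> mua \<and> 0 \<le> la \<and> la \<le> 1 \<and> 0 \<le> lb \<and> lb \<le> 1 \<and>
     real mub + lb \<le> real n \<and> real mua + la \<le> real mub + lb" using mu l by simp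
  hence "H (s + al') (rp mua la) * H (s + al) (rp mub lb) - H (s + al') (rp mub lb) * H (s + al) (rp mua la) \<le> 0"
    by (rule ratio_aux[OF \<open>al < al'\<close> al(2), of "mub - mua", rule_format])
  thus ?thesis by simp
qed

lemma order_main:
  assumes ab: "al < be" "be \<le> L" and ab': "al' < be'" "be' \<le> L" and le: "al \<le> al'" "be \<le> be'"
    and Z: "Z \<in> P" "\<forall>Y\<in>P. H (s + al) Y * H (s + be) Y \<le> H (s + al) Z * H (s + be) Z"
    and Z': "Z' \<in> P" "\<forall>Y\<in>P. H (s + al') Y * H (s + be') Y \<le> H (s + al') Z' * H (s + be') Z'"
    and m1: "L + 1 \<le> mu1" "0 \<le> l1" "l1 \<le> 1" "real mu1 + l1 \<le> real n" "Z = rp mu1 l1"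
    and m2: "L + 1 \<le> mu2" "0 \<le> l2" "l2 \<le> 1" "real mu2 + l2 \<le> real n" "Z' = rp mu2 l2"
    and lt: "real mu2 + l2 < real mu1 + l1"
  shows "Z = Z'"
proof -
  define i where "i = s + al"
  define j where "j = s + be"
  define i' where "i' = s + al'"
  define j' where "j' = s + be'"
  have mm: "mu2 \<le> mu1"
  proof (rule ccontr)
    assume "\<not> ?thesis"
    hence "real mu1 + 1 \<le> real mu2" by simp
    thus False using lt m1 m2 by linarith
  qed
  have r1: "H i' Z' * H i Z \<le> H i' Z * H i Z'"
    using ratio[of al al' mu2 mu1 l2 l1] ab ab' le m1 m2 mm lt by (simp add: i_def i'_def)
  have r2: "H j' Z' * H j Z \<le> H j' Z * H j Z'"
    using ratio[of be be' mu2 mu1 l2 l1] ab ab' le m1 m2 mm lt by (simp add: j_def j'_def)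
  have nn: "H k Z \<ge> 0" "H k Z' \<ge> 0" for k using Z Z' H_nonneg_P by auto
  have prod: "(H i' Z' * H i Z) * (H j' Z' * H j Z) \<le> (H i' Z * H i Z') * (H j' Z * H j Z')"
    by (rule mult_mono[OF r1 r2]) (simp_all add: nn)
  define F where "F = H i Z * H j Z"
  define FZ' where "FZ' = H i Z' * H j Z'"
  define G where "G = H i' Z * H j' Z"
  define GZ' where "GZ' = H i' Z' * H j' Z'"
  have p: "GZ' * F \<le> G * FZ'" using prod by (simp add: F_def FZ'_def G_def GZ'_def algebra_simps)
  have F1: "FZ' \<le> F" using Z Z' by (simp add: F_def FZ'_def i_def j_def)
  have G1: "G \<le> GZ'" using Z Z' by (simp add: G_def GZ'_def i'_def j'_def)
  have Gp: "GZ' > 0" using max_pos[OF Z'] by (simp add: GZ'_def i'_def j'_def)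
  have G0: "G \<ge> 0" "FZ' \<ge> 0" using nn by (simp_all add: G_def FZ'_def)
  have "FZ' = F"
  proof (rule ccontr)
    assume "FZ' \<noteq> F"
    hence "FZ' < F" using F1 by simp
    have "G * FZ' \<le> GZ' * FZ'" using G1 G0 by (simp add: mult_right_mono)
    also have "\<dots> < GZ' * F" using Gp \<open>FZ' < F\<close> by simp
    finally show False using p by simp
  qed
  moreover have "cross2 (D i) (D j) \<noteq> 0" using ord[OF ab] by (simp add: i_def j_def)
  ultimately show "Z = Z'"
    using max_unique[of i j Z Z'] Z Z' by (simp add: F_def FZ'_def i_def j_def)
qed

end



lemma arclen_arith:
  assumes m: "0 < m" "m < (n::nat)"
  shows "(s mod n + n - (s + m) mod n) mod n = n - m"
proof -
  define r where "r = s mod n"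
  have r: "r < n" using m by (simp add: r_def)
  have sm: "(s + m) mod n = (r + m) mod n" unfolding r_def by (rule mod_add_left_eq[symmetric])
  show ?thesis
  proof (cases "r + m < n")
    case True
    hence "(s + m) mod n = r + m" using sm by simp
    hence "s mod n + n - (s + m) mod n = n - m" unfolding r_def[symmetric] using True by linarith
    thus ?thesis using m by simp
  next
    case False
    have "(r + m) mod n = (r + m - n + n) mod n" using False by simp
    also have "\<dots> = (r + m - n) mod n" by (rule mod_add_self2)
    also have "\<dots> = r + m - n" using r m by simp
    finally have "(s + m) mod n = r + m - n" using sm by simp
    hence "s mod n + n - (s + m) mod n = (n - m) + n" unfolding r_def[symmetric] using False r m by linarith
    hence "(s mod n + n - (s + m) mod n) mod n = (n - m) mod n" by simp
    thus ?thesis using m by simp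
  qed
qed
lemma bpath_nat:
  assumes l: "0 \<le> lam" "lam \<le> 1"
  shows "bpath n v (real N + lam) = vtx n v N + lam *\<^sub>R edir n v N"
proof (cases "lam = 1")
  case True
  have "\<lfloor>real N + lam\<rfloor> = int (Suc N)" using True by simp
  hence "nat \<lfloor>real N + lam\<rfloor> = Suc N" by (simp only: nat_int)
  moreover have "real N + lam - real_of_int \<lfloor>real N + lam\<rfloor> = 0" using True by simp
  ultimately have "bpath n v (real N + lam) = vtx n v (Suc N)" by (simp add: bpath_def)
  thus ?thesis using True by (simp add: edir_def)
next
  case False
  hence "\<lfloor>real N + lam\<rfloor> = int N" using l by (simp add: floor_eq_iff)
  thus ?thesis by (simp add: bpath_def)
qed

context cp begin

lemma eline_mod: "eline n v (k mod n) = eline n v k"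
  by (simp add: eline_def W_mod D_mod)

lemma Zpt_mod: "Zpt n v (a mod n) (b mod n) = Zpt n v a b"
  by (simp add: Zpt_def eline_mod)

end

context rng begin

lemma pair_off:
  assumes "i = (s + al) mod n" "j = (s + be) mod n" "al \<le> L" "be \<le> L" "eprec n v i j"
  shows "al < be"
proof -
  have "cross2 (D (s + al)) (D (s + be)) < 0" using eprec_cross[OF assms(5)] assms(1,2) by (simp add: D_mod)
  moreover have "\<not> be < al" using ord[of be al] assms(3) calculation by (auto simp: cross2_anti[of "D (s + be)"])
  moreover have "al \<noteq> be" using calculation by (auto simp: cross2_simps)
  ultimately show ?thesis by simp
qed

lemma preceq_off:
  assumes "i = (s + al) mod n" "i' = (s + al') mod n" "al \<le> L" "al' \<le> L" "epreceq n v i i'"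
  shows "al \<le> al'"
proof (cases "i mod n = i' mod n")
  case True
  hence "(s + al) mod n = (s + al') mod n" using assms(1,2) by simp
  thus ?thesis using offs_eq[of al n al' s] assms(3,4) L_lt by simp
next
  case False
  hence "eprec n v i i'" using assms(5) by (simp add: epreceq_def)
  thus ?thesis using pair_off[OF assms(1-4)] by simp
qed

lemma Z_full:
  assumes "al < be" "be \<le> L"
  shows "\<exists>mu lam. L + 1 \<le> mu \<and> 0 \<le> lam \<and> lam \<le> 1 \<and> real mu + lam \<le> real n \<and>
      Zpt n v (s + al) (s + be) = rp mu lam \<and> Zpt n v (s + al) (s + be) \<in> P \<and>
      (\<forall>Y\<in>P. H (s + al) Y * H (s + be) Y \<le> H (s + al) (Zpt n v (s + al) (s + be)) * H (s + be) (Zpt n v (s + al) (s + be)))"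
proof -
  have "cross2 (D (s + al)) (D (s + be)) \<noteq> 0" using ord[OF assms] by simp
  from Zpt_char[OF this] have Z: "Zpt n v (s + al) (s + be) \<in> P"
    "\<forall>Y\<in>P. H (s + al) Y * H (s + be) Y \<le> H (s + al) (Zpt n v (s + al) (s + be)) * H (s + be) (Zpt n v (s + al) (s + be))"
    by auto
  from Z_loc[OF assms Z] obtain mu lam where "L + 1 \<le> mu \<and> 0 \<le> lam \<and> lam \<le> 1 \<and> real mu + lam \<le> real n \<and>
           Zpt n v (s + al) (s + be) = W (s + mu) + lam *\<^sub>R D (s + mu)" by blast
  thus ?thesis using Z unfolding rp_def by blast
qed

lemma arc_param:
  assumes "L + 1 \<le> mu" "0 \<le> lam" "lam \<le> 1" "real mu + lam \<le> real n"
  defines "a0 \<equiv> (s + L + 1) mod n"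
  shows "real a0 \<le> real a0 + real (mu - (L + 1)) + lam \<and>
         real a0 + real (mu - (L + 1)) + lam \<le> real a0 + real (n - (L + 1)) \<and>
         bpath n v (real a0 + real (mu - (L + 1)) + lam) = rp mu lam"
proof -
  have "bpath n v (real (a0 + (mu - (L + 1))) + lam) = W (a0 + (mu - (L + 1))) + lam *\<^sub>R D (a0 + (mu - (L + 1)))"
    using bpath_nat assms by blast
  moreover have "(a0 + (mu - (L + 1))) mod n = (s + mu) mod n"
  proof -
    have "(a0 + (mu - (L + 1))) mod n = (s + L + 1 + (mu - (L + 1))) mod n"
      by (simp add: a0_def mod_add_left_eq)
    also have "s + L + 1 + (mu - (L + 1)) = s + mu" using assms by simp
    finally show ?thesis .
  qed
  hence "W (a0 + (mu - (L + 1))) = W (s + mu)" "D (a0 + (mu - (L + 1))) = D (s + mu)"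
    using W_mod D_mod by metis+
  ultimately have "bpath n v (real a0 + real (mu - (L + 1)) + lam) = rp mu lam" by (simp add: rp_def)
  moreover have "real (mu - (L + 1)) + lam \<le> real (n - (L + 1))" using assms by (simp add: of_nat_diff)
  ultimately show ?thesis using assms by simp
qed

end



theorem lemma6:
  fixes n :: nat and v :: "nat \<Rightarrow> real^2" and s t :: nat
  assumes "convex_cw_polygon n v"
    and "no_parallel_edges n v"
    and "s < n" and "t < n"
    and "epreceq n v s t"
  defines "S \<equiv> {(i, j). i \<in> edge_range n s t \<and> j \<in> edge_range n s t \<and> eprec n v i j}"
  shows "(\<forall>(i, j)\<in>S. in_arc n v (Suc t) s (Zpt n v i j)) \<and>
         (\<forall>(i, j)\<in>S. \<forall>(i', j')\<in>S. epreceq n v i i' \<and> epreceq n v j j' \<longrightarrow>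
              arc_le n v (Suc t) s (Zpt n v i j) (Zpt n v i' j'))"
proof -
  interpret cp n v using assms(1,2) by unfold_locales
  define L where "L = (t + n - s) mod n"
  have tL: "t = (s + L) mod n"
  proof (cases "s \<le> t")
    case True
    hence "t + n - s = (t - s) + n" by simp
    hence "L = ((t - s) + n) mod n" by (simp add: L_def)
    also have "\<dots> = (t - s) mod n" by (rule mod_add_self2)
    also have "\<dots> = t - s" using assms(4) by (intro mod_less) linarith
    finally have "s + L = t" using True by simp
    thus ?thesis using assms(4) by simp
  next
    case False
    hence "t + n - s < n" using assms(3) by linarith
    hence "L = t + n - s" by (simp add: L_def)
    hence "s + L = t + n" using False assms(3) by linarith
    thus ?thesis using assms(4) by simp
  qed
  have Lr: "L < n" using npos by (simp add: L_def)
  have range: "edge_range n s t = {(s + k) mod n | k. k \<le> L}" by (simp add: edge_range_def L_def)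
  show ?thesis
  proof (cases "s = t")
    case True
    hence "L = 0" using assms(3) by (simp add: L_def)
    hence "edge_range n s t = {s}" using range assms(3) by auto
    hence "S = {}" using True by (auto simp: S_def eprec_def)
    thus ?thesis by simp
  next
    case False
    hence "eprec n v s t" using assms(3,4,5) by (simp add: epreceq_def)
    hence "cross2 (D s) (D t) < 0" by (rule eprec_cross)
    hence sneg: "cross2 (D s) (D (s + L)) < 0" using tL D_mod by metis
    have Lp: "1 \<le> L"
    proof (rule ccontr)
      assume "\<not> 1 \<le> L"
      hence "L = 0" by simp
      thus False using tL False assms(3) by simp
    qed
    interpret rng n v s L using Lr Lp sneg by unfold_locales
    have a0: "Suc t mod n = (s + L + 1) mod n" using tL by (simp add: mod_Suc_eq)
    have al: "arc_len n (Suc t) s = n - (L + 1)"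
    proof -
      have "arc_len n (Suc t) s = (s mod n + n - (s + (L + 1)) mod n) mod n"
        using a0 by (simp add: arc_len_def add.assoc)
      also have "\<dots> = n - (L + 1)" using arclen_arith[of "L + 1" n s] L_le n3 by simp
      finally show ?thesis .
    qed
    have inS: "\<exists>al be mu lam. i = (s + al) mod n \<and> j = (s + be) mod n \<and> al < be \<and> be \<le> L \<and>
        L + 1 \<le> mu \<and> 0 \<le> lam \<and> lam \<le> 1 \<and> real mu + lam \<le> real n \<and>
        Zpt n v i j = rp mu lam \<and> Zpt n v i j \<in> P \<and>
        (\<forall>Y\<in>P. H (s + al) Y * H (s + be) Y \<le> H (s + al) (Zpt n v i j) * H (s + be) (Zpt n v i j))"
      if ij: "(i, j) \<in> S" for i j
    proof -
      obtain al be where ab: "i = (s + al) mod n" "j = (s + be) mod n" "al \<le> L" "be \<le> L" "eprec n v i j"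
        using ij by (auto simp: S_def range)
      have "al < be" using pair_off[OF ab] .
      moreover have "Zpt n v i j = Zpt n v (s + al) (s + be)" using ab Zpt_mod by simp
      ultimately show ?thesis using Z_full[of al be] ab by auto
    qed
    have inarc: "in_arc n v (Suc t) s (rp mu lam)"
      if "L + 1 \<le> mu" "0 \<le> lam" "lam \<le> 1" "real mu + lam \<le> real n" for mu lam
      using arc_param[OF that] a0 al unfolding in_arc_def by (intro exI[of _ "real ((s + L + 1) mod n) + real (mu - (L + 1)) + lam"]) auto
    have part1: "in_arc n v (Suc t) s (Zpt n v i j)" if x: "(i, j) \<in> S" for i j
    proof -
      obtain al be mu lam where h: "L + 1 \<le> mu" "0 \<le> lam" "lam \<le> 1" "real mu + lam \<le> real n"
        "Zpt n v i j = rp mu lam" using inS[OF x] by blast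
      show ?thesis using inarc[OF h(1-4)] h(5) by simp
    qed
    have part2: "arc_le n v (Suc t) s (Zpt n v i j) (Zpt n v i' j')"
      if x: "(i, j) \<in> S" and y: "(i', j') \<in> S" and pre': "epreceq n v i i'" "epreceq n v j j'" for i j i' j'
    proof -
      obtain al be mu1 l1 where h1: "i = (s + al) mod n" "j = (s + be) mod n" "al < be" "be \<le> L"
        "L + 1 \<le> mu1" "0 \<le> l1" "l1 \<le> 1" "real mu1 + l1 \<le> real n"
        "Zpt n v i j = rp mu1 l1" "Zpt n v i j \<in> P"
        "\<forall>Y\<in>P. H (s + al) Y * H (s + be) Y \<le> H (s + al) (Zpt n v i j) * H (s + be) (Zpt n v i j)"
        using inS[OF x] by blast
      obtain al' be' mu2 l2 where h2: "i' = (s + al') mod n" "j' = (s + be') mod n" "al' < be'" "be' \<le> L"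
        "L + 1 \<le> mu2" "0 \<le> l2" "l2 \<le> 1" "real mu2 + l2 \<le> real n"
        "Zpt n v i' j' = rp mu2 l2" "Zpt n v i' j' \<in> P"
        "\<forall>Y\<in>P. H (s + al') Y * H (s + be') Y \<le> H (s + al') (Zpt n v i' j') * H (s + be') (Zpt n v i' j')"
        using inS[OF y] by blast
      let ?a0 = "real ((s + L + 1) mod n)"
      note P1 = arc_param[OF h1(5-8)]
      note P2 = arc_param[OF h2(5-8)]
      have le1: "al \<le> al'" using preceq_off[OF h1(1) h2(1) _ _ pre'(1)] h1 h2 by simp
      have le2: "be \<le> be'" using preceq_off[OF h1(2) h2(2) _ _ pre'(2)] h1 h2 by simp
      show ?thesis
      proof (cases "real mu1 + l1 \<le> real mu2 + l2")
        case True
        hence "real (mu1 - (L + 1)) + l1 \<le> real (mu2 - (L + 1)) + l2" using h1 h2 by (simp add: of_nat_diff)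
        thus ?thesis unfolding arc_le_def a0 al using P1 P2 h1(9) h2(9)
          by (intro exI[of _ "?a0 + real (mu1 - (L + 1)) + l1"] exI[of _ "?a0 + real (mu2 - (L + 1)) + l2"]) auto
      next
        case False
        hence "Zpt n v i j = Zpt n v i' j'"
          using order_main[OF h1(3,4) h2(3,4) le1 le2 h1(10,11) h2(10,11) h1(5-9) h2(5-9)] by simp
        thus ?thesis unfolding arc_le_def a0 al using P2 h2(9)
          by (intro exI[of _ "?a0 + real (mu2 - (L + 1)) + l2"] exI[of _ "?a0 + real (mu2 - (L + 1)) + l2"]) auto
      qed
    qed
    show ?thesis using part1 part2 by auto
  qed
qed



end
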